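(* Let $\mathbb{C}$ be a generalized 2-category. Let $\alpha\colon \mathrm{id}_{A'}\to\mathrm{id}_A$, $\beta\colon \mathrm{id}_{B'}\to\mathrm{id}_B$ and $\gamma\colon\mathrm{id}_{C'}\to\mathrm{id}_C$ be 2-cells, and let $f\colon A\to B$, $g\colon B\to C$, $f'\colon A'\to B'$, $g'\colon B'\to C'$ be 1-cells. Then there exists at least one 2-cell $$ g{\downarrow_{\beta,\gamma}}\circ f{\downarrow_{\alpha,\beta}} \;\longrightarrow\; (g\circ f){\downarrow_{\alpha,\gamma}}$$ and at least one 2-cell $$ (g'\circ f'){\uparrow^{\alpha,\gamma}} \;\longrightarrow\; g'{\uparrow^{\beta,\gamma}}\circ f'{\uparrow^{\alpha,\beta}}.$$
   Context: A generalized 2-category $\mathbb{C}$ consists of: (i) a category $\mathbb{C}_1$, whose objects are the 0-cells and whose arrows are the 1-cells of $\mathbb{C}$ (composition written $g\circ f$, identities $\mathrm{id}_A$); (ii) a category $\mathbb{C}_v$ whose objects are the 1-cells of $\mathbb{C}$ and whose arrows are called 2-cells; a 2-cell $f\to g$ may exist between non-parallel 1-cells (domains/codomains of $f,g$ in $\mathbb{C}_1$ may differ); composition in $\mathbb{C}_v$ is called vertical composition and written $\circ$; (iii) an associative horizontal composition: for 1-cells $f_1\colon A_1\to B_1$, $f_2\colon B_1\to C_1$, $g_1\colon A_2\to B_2$, $g_2\colon B_2\to C_2$ and 2-cells $\alpha\colon f_1\to g_1$, $\beta\colon f_2\to g_2$, a 2-cell $\beta\star\alpha\colon f_2\circ f_1\to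 g_2\circ g_1$, satisfying the interchange law $(\alpha_2\star\beta_2)\circ(\alpha_1\star\beta_1)=(\alpha_2\circ\alpha_1)\star(\beta_2\circ\beta_1)$ whenever defined; (iv) operations $\nabla$ and $\triangle$: for 2-cells $\alpha\colon\mathrm{id}_{A'}\to\mathrm{id}_A$ and $\beta\colon\mathrm{id}_{B'}\to\mathrm{id}_B$, let $\mathbb{C}_{\alpha,\beta}$ be the subcategory of $\mathbb{C}_v$ whose objects are the 1-cells $A\to B$ and the 1-cells $A'\to B'$, and whose arrows are all 2-cells between 1-cells $A\to B$, all 2-cells between 1-cells $A'\to B'$, and all 2-cells $\gamma$ from a 1-cell $A'\to B'$ to a 1-cell $A\to B$ satisfying $\gamma\star\alpha=\beta\star\gamma=\gamma$. Let $\mathbf U$, $\mathbf U'$ be the inclusions into $\mathbb{C}_{\alpha,\beta}$ of the full subcategories of $\mathbb{C}_v$ on 1-cells $A\to B$, respectively $A'\to B'$. For every 1-cell $f\colon A\to B$, $\nabla_{\alpha,\beta}(f)$ is a universal arrow from $\mathbf U'$ to $f$: a 1-cell $f{\downarrow_{\alpha,\beta}}\colon A'\to B'$ and a 2-cell $\nabla_{\alpha,\beta}(f)\colon f{\downarrow_{\alpha,\beta}}\to f$ in $\mathbb{C}_{\alpha,\beta}$ such that every arrow $h\to f$ of $\mathbb{C}_{\alpha,\beta}$ with $h\colon A'\to B'$ factors uniquely as $\nabla_{\alpha,\beta}(f)\circ\delta$ with $\delta\colon h\to f{\downarrow_{\alpha,\beta}}$. Dually, for every 1-cell $f'\colon A'\to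 B'$, $\triangle_{\alpha,\beta}(f')\colon f'\to f'{\uparrow^{\alpha,\beta}}$ (with $f'{\uparrow^{\alpha,\beta}}\colon A\to B$) is a universal arrow from $f'$ to $\mathbf U$. These satisfy $\nabla_{\mathrm{id}_{\mathrm{id}},\beta}(f)\star\nabla_{\alpha,\mathrm{id}_{\mathrm{id}}}(g)=\nabla_{\alpha,\beta}(f\circ g)$ and $\triangle_{\mathrm{id}_{\mathrm{id}},\beta}(f)\star\triangle_{\alpha,\mathrm{id}_{\mathrm{id}}}(g)=\triangle_{\alpha,\beta}(f\circ g)$ whenever typed, where $\mathrm{id}_{\mathrm{id}}$ denotes the identity 2-cell on the identity 1-cell of the appropriate 0-cell. Notation: $f{\downarrow_{\alpha,\beta}}$ is the domain (in $\mathbb{C}_v$) of $\nabla_{\alpha,\beta}(f)$ and $f{\uparrow^{\alpha,\beta}}$ the codomain of $\triangle_{\alpha,\beta}(f)$. *)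

theory Defs
  imports Main
begin

text \<open>A generalized 2-category, with explicit carrier sets.
  'o = 0-cells, 'a = 1-cells, 'c = 2-cells.
  comp1 g f is g o f (f first); vcomp b a is b o a (a first);
  hcomp b a is b \<star> a, for a : f1 -> g1, b : f2 -> g2, giving f2 o f1 -> g2 o g1.
  nabla K a b f is the 2-cell nabla_{a,b}(f), delta K a b f' the 2-cell triangle_{a,b}(f').\<close>

record ('o, 'a, 'c) gen2cat =
  Ob    :: "'o set"
  Ar    :: "'a set"
  dom1  :: "'a \<Rightarrow> 'o"
  cod1  :: "'a \<Rightarrow> 'o"
  comp1 :: "'a \<Rightarrow> 'a \<Rightarrow> 'a"
  id1   :: "'o \<Rightarrow> 'a"
  Cell  :: "'c set"
  src2  :: "'c \<Rightarrow> 'a"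
  tgt2  :: "'c \<Rightarrow> 'a"
  vcomp :: "'c \<Rightarrow> 'c \<Rightarrow> 'c"
  id2   :: "'a \<Rightarrow> 'c"
  hcomp :: "'c \<Rightarrow> 'c \<Rightarrow> 'c"
  nabla :: "'c \<Rightarrow> 'c \<Rightarrow> 'a \<Rightarrow> 'c"
  delta :: "'c \<Rightarrow> 'c \<Rightarrow> 'a \<Rightarrow> 'c"

definition hom1 :: "('o, 'a, 'c, 'm) gen2cat_scheme \<Rightarrow> 'o \<Rightarrow> 'o \<Rightarrow> 'a set" where
  "hom1 K A B = {f \<in> Ar K. dom1 K f = A \<and> cod1 K f = B}"

definition hcomposable :: "('o, 'a, 'c, 'm) gen2cat_scheme \<Rightarrow> 'c \<Rightarrow> 'c \<Rightarrow> bool" where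
  "hcomposable K b a \<longleftrightarrow> a \<in> Cell K \<and> b \<in> Cell K \<and>
     cod1 K (src2 K a) = dom1 K (src2 K b) \<and> cod1 K (tgt2 K a) = dom1 K (tgt2 K b)"

definition vcomposable :: "('o, 'a, 'c, 'm) gen2cat_scheme \<Rightarrow> 'c \<Rightarrow> 'c \<Rightarrow> bool" where
  "vcomposable K b a \<longleftrightarrow> a \<in> Cell K \<and> b \<in> Cell K \<and> tgt2 K a = src2 K b"

definition id_cell :: "('o, 'a, 'c, 'm) gen2cat_scheme \<Rightarrow> 'c \<Rightarrow> 'o \<Rightarrow> 'o \<Rightarrow> bool" where
  "id_cell K a A' A \<longleftrightarrow> A' \<in> Ob K \<and> A \<in> Ob K \<and> a \<in> Cell K \<and>
     src2 K a = id1 K A' \<and> tgt2 K a = id1 K A"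

definition arr_ab :: "('o, 'a, 'c, 'm) gen2cat_scheme \<Rightarrow> 'c \<Rightarrow> 'c \<Rightarrow> 'o \<Rightarrow> 'o \<Rightarrow> 'o \<Rightarrow> 'o \<Rightarrow> 'c \<Rightarrow> bool" where
  "arr_ab K a b A' A B' B c \<longleftrightarrow> c \<in> Cell K \<and>
     ((src2 K c \<in> hom1 K A B \<and> tgt2 K c \<in> hom1 K A B) \<or>
      (src2 K c \<in> hom1 K A' B' \<and> tgt2 K c \<in> hom1 K A' B') \<or>
      (src2 K c \<in> hom1 K A' B' \<and> tgt2 K c \<in> hom1 K A B \<and>
       hcomp K c a = c \<and> hcomp K b c = c))"

definition gen2cat :: "('o, 'a, 'c, 'm) gen2cat_scheme \<Rightarrow> bool" where
  "gen2cat K \<longleftrightarrow>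
   \<comment> \<open>(i) the category C_1\<close>
   (\<forall>f \<in> Ar K. dom1 K f \<in> Ob K \<and> cod1 K f \<in> Ob K) \<and>
   (\<forall>A \<in> Ob K. id1 K A \<in> hom1 K A A) \<and>
   (\<forall>f \<in> Ar K. \<forall>g \<in> Ar K. cod1 K f = dom1 K g \<longrightarrow>
      comp1 K g f \<in> hom1 K (dom1 K f) (cod1 K g)) \<and>
   (\<forall>f \<in> Ar K. \<forall>g \<in> Ar K. \<forall>h \<in> Ar K. cod1 K f = dom1 K g \<longrightarrow> cod1 K g = dom1 K h \<longrightarrow>
      comp1 K h (comp1 K g f) = comp1 K (comp1 K h g) f) \<and>
   (\<forall>f \<in> Ar K. comp1 K f (id1 K (dom1 K f)) = f \<and> comp1 K (id1 K (cod1 K f)) f = f) \<and>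
   \<comment> \<open>(ii) the category C_v\<close>
   (\<forall>c \<in> Cell K. src2 K c \<in> Ar K \<and> tgt2 K c \<in> Ar K) \<and>
   (\<forall>f \<in> Ar K. id2 K f \<in> Cell K \<and> src2 K (id2 K f) = f \<and> tgt2 K (id2 K f) = f) \<and>
   (\<forall>a b. vcomposable K b a \<longrightarrow>
      vcomp K b a \<in> Cell K \<and> src2 K (vcomp K b a) = src2 K a \<and> tgt2 K (vcomp K b a) = tgt2 K b) \<and>
   (\<forall>a b c. vcomposable K b a \<longrightarrow> vcomposable K c b \<longrightarrow>
      vcomp K c (vcomp K b a) = vcomp K (vcomp K c b) a) \<and>
   (\<forall>a \<in> Cell K. vcomp K a (id2 K (src2 K a)) = a \<and> vcomp K (id2 K (tgt2 K a)) a = a) \<and>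
   \<comment> \<open>(iii) horizontal composition\<close>
   (\<forall>a b. hcomposable K b a \<longrightarrow>
      hcomp K b a \<in> Cell K \<and>
      src2 K (hcomp K b a) = comp1 K (src2 K b) (src2 K a) \<and>
      tgt2 K (hcomp K b a) = comp1 K (tgt2 K b) (tgt2 K a)) \<and>
   (\<forall>a b c. hcomposable K b a \<longrightarrow> hcomposable K c b \<longrightarrow>
      hcomp K c (hcomp K b a) = hcomp K (hcomp K c b) a) \<and>
   (\<forall>a1 a2 b1 b2. hcomposable K a1 b1 \<longrightarrow> hcomposable K a2 b2 \<longrightarrow>
      vcomposable K a2 a1 \<longrightarrow> vcomposable K b2 b1 \<longrightarrow>
      vcomp K (hcomp K a2 b2) (hcomp K a1 b1) = hcomp K (vcomp K a2 a1) (vcomp K b2 b1)) \<and>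
   \<comment> \<open>(iv) nabla: universal arrows from U' to f\<close>
   (\<forall>a b A' A B' B. id_cell K a A' A \<longrightarrow> id_cell K b B' B \<longrightarrow>
      (\<forall>f \<in> hom1 K A B.
        arr_ab K a b A' A B' B (nabla K a b f) \<and>
        tgt2 K (nabla K a b f) = f \<and> src2 K (nabla K a b f) \<in> hom1 K A' B' \<and>
        (\<forall>t. arr_ab K a b A' A B' B t \<longrightarrow> tgt2 K t = f \<longrightarrow> src2 K t \<in> hom1 K A' B' \<longrightarrow>
           (\<exists>!d. d \<in> Cell K \<and> src2 K d = src2 K t \<and> tgt2 K d = src2 K (nabla K a b f) \<and>
                 vcomp K (nabla K a b f) d = t)))) \<and>
   \<comment> \<open>(iv) triangle: universal arrows from f' to U\<close>
   (\<forall>a b A' A B' B. id_cell K a A' A \<longrightarrow> id_cell K b B' B \<longrightarrow>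
      (\<forall>f \<in> hom1 K A' B'.
        arr_ab K a b A' A B' B (delta K a b f) \<and>
        src2 K (delta K a b f) = f \<and> tgt2 K (delta K a b f) \<in> hom1 K A B \<and>
        (\<forall>t. arr_ab K a b A' A B' B t \<longrightarrow> src2 K t = f \<longrightarrow> tgt2 K t \<in> hom1 K A B \<longrightarrow>
           (\<exists>!d. d \<in> Cell K \<and> src2 K d = tgt2 K (delta K a b f) \<and> tgt2 K d = tgt2 K t \<and>
                 vcomp K d (delta K a b f) = t)))) \<and>
   \<comment> \<open>compatibility of nabla and triangle with composition of 1-cells\<close>
   (\<forall>a b A' A X B' B f g. id_cell K a A' A \<longrightarrow> id_cell K b B' B \<longrightarrow> X \<in> Ob K \<longrightarrow>
      g \<in> hom1 K A X \<longrightarrow> f \<in> hom1 K X B \<longrightarrow>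
      hcomp K (nabla K (id2 K (id1 K X)) b f) (nabla K a (id2 K (id1 K X)) g)
        = nabla K a b (comp1 K f g)) \<and>
   (\<forall>a b A' A X B' B f g. id_cell K a A' A \<longrightarrow> id_cell K b B' B \<longrightarrow> X \<in> Ob K \<longrightarrow>
      g \<in> hom1 K A' X \<longrightarrow> f \<in> hom1 K X B' \<longrightarrow>
      hcomp K (delta K (id2 K (id1 K X)) b f) (delta K a (id2 K (id1 K X)) g)
        = delta K a b (comp1 K f g))"

definition down :: "('o, 'a, 'c, 'm) gen2cat_scheme \<Rightarrow> 'c \<Rightarrow> 'c \<Rightarrow> 'a \<Rightarrow> 'a" where
  "down K a b f = src2 K (nabla K a b f)"

definition up :: "('o, 'a, 'c, 'm) gen2cat_scheme \<Rightarrow> 'c \<Rightarrow> 'c \<Rightarrow> 'a \<Rightarrow> 'a" where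
  "up K a b f = tgt2 K (delta K a b f)"

end

theory Submission
  imports Defs
begin

context
  fixes K :: "('o, 'a, 'c, 'm) gen2cat_scheme"
  assumes G: "gen2cat K"
begin

lemmas GG = G[unfolded gen2cat_def]
lemmas GD1 = GG[THEN conjunct1]
lemmas GD2 = GG[THEN conjunct2, THEN conjunct1]
lemmas GD3 = GG[THEN conjunct2, THEN conjunct2, THEN conjunct1]
lemmas GD4 = GG[THEN conjunct2, THEN conjunct2, THEN conjunct2, THEN conjunct1]
lemmas GD5 = GG[THEN conjunct2, THEN conjunct2, THEN conjunct2, THEN conjunct2, THEN conjunct1]
lemmas GD6 = GG[THEN conjunct2, THEN conjunct2, THEN conjunct2, THEN conjunct2, THEN conjunct2, THEN conjunct1]
lemmas GD7 = GG[THEN conjunct2, THEN conjunct2, THEN conjunct2, THEN conjunct2, THEN conjunct2, THEN conjunct2, THEN conjunct1]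
lemmas GD8 = GG[THEN conjunct2, THEN conjunct2, THEN conjunct2, THEN conjunct2, THEN conjunct2, THEN conjunct2, THEN conjunct2, THEN conjunct1]
lemmas GD9 = GG[THEN conjunct2, THEN conjunct2, THEN conjunct2, THEN conjunct2, THEN conjunct2, THEN conjunct2, THEN conjunct2, THEN conjunct2, THEN conjunct1]
lemmas GD10 = GG[THEN conjunct2, THEN conjunct2, THEN conjunct2, THEN conjunct2, THEN conjunct2, THEN conjunct2, THEN conjunct2, THEN conjunct2, THEN conjunct2, THEN conjunct1]
lemmas GD11 = GG[THEN conjunct2, THEN conjunct2, THEN conjunct2, THEN conjunct2, THEN conjunct2, THEN conjunct2, THEN conjunct2, THEN conjunct2, THEN conjunct2, THEN conjunct2, THEN conjunct1]
lemmas GD12 = GG[THEN conjunct2, THEN conjunct2, THEN conjunct2, THEN conjunct2, THEN conjunct2, THEN conjunct2, THEN conjunct2, THEN conjunct2, THEN conjunct2, THEN conjunct2, THEN conjunct2, THEN conjunct1]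
lemmas GD13 = GG[THEN conjunct2, THEN conjunct2, THEN conjunct2, THEN conjunct2, THEN conjunct2, THEN conjunct2, THEN conjunct2, THEN conjunct2, THEN conjunct2, THEN conjunct2, THEN conjunct2, THEN conjunct2, THEN conjunct1]
lemmas GD14 = GG[THEN conjunct2, THEN conjunct2, THEN conjunct2, THEN conjunct2, THEN conjunct2, THEN conjunct2, THEN conjunct2, THEN conjunct2, THEN conjunct2, THEN conjunct2, THEN conjunct2, THEN conjunct2, THEN conjunct2, THEN conjunct1]
lemmas GD15 = GG[THEN conjunct2, THEN conjunct2, THEN conjunct2, THEN conjunct2, THEN conjunct2, THEN conjunct2, THEN conjunct2, THEN conjunct2, THEN conjunct2, THEN conjunct2, THEN conjunct2, THEN conjunct2, THEN conjunct2, THEN conjunct2, THEN conjunct1]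
lemmas GD16 = GG[THEN conjunct2, THEN conjunct2, THEN conjunct2, THEN conjunct2, THEN conjunct2, THEN conjunct2, THEN conjunct2, THEN conjunct2, THEN conjunct2, THEN conjunct2, THEN conjunct2, THEN conjunct2, THEN conjunct2, THEN conjunct2, THEN conjunct2, THEN conjunct1]
lemmas GD17 = GG[THEN conjunct2, THEN conjunct2, THEN conjunct2, THEN conjunct2, THEN conjunct2, THEN conjunct2, THEN conjunct2, THEN conjunct2, THEN conjunct2, THEN conjunct2, THEN conjunct2, THEN conjunct2, THEN conjunct2, THEN conjunct2, THEN conjunct2, THEN conjunct2]

lemma Ar_ob: "f \<in> Ar K \<Longrightarrow> dom1 K f \<in> Ob K \<and> cod1 K f \<in> Ob K"
  using GD1 by blast

lemma id_hom: "A \<in> Ob K \<Longrightarrow> id1 K A \<in> hom1 K A A"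
  using GD2 by blast

lemma comp_hom: "f \<in> hom1 K A B \<Longrightarrow> g \<in> hom1 K B C \<Longrightarrow> comp1 K g f \<in> hom1 K A C"
proof -
  assume a: "f \<in> hom1 K A B" "g \<in> hom1 K B C"
  have "\<forall>f \<in> Ar K. \<forall>g \<in> Ar K. cod1 K f = dom1 K g \<longrightarrow>
      comp1 K g f \<in> hom1 K (dom1 K f) (cod1 K g)" using GD3 by blast
  with a show ?thesis unfolding hom1_def by auto
qed

lemma assoc: "f \<in> hom1 K A B \<Longrightarrow> g \<in> hom1 K B C \<Longrightarrow> h \<in> hom1 K C D \<Longrightarrow>
   comp1 K h (comp1 K g f) = comp1 K (comp1 K h g) f"
proof -
  assume a: "f \<in> hom1 K A B" "g \<in> hom1 K B C" "h \<in> hom1 K C D"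
  have "\<forall>f \<in> Ar K. \<forall>g \<in> Ar K. \<forall>h \<in> Ar K. cod1 K f = dom1 K g \<longrightarrow> cod1 K g = dom1 K h \<longrightarrow>
      comp1 K h (comp1 K g f) = comp1 K (comp1 K h g) f" using GD4 by blast
  with a show ?thesis unfolding hom1_def by auto
qed

lemma idl: "f \<in> hom1 K A B \<Longrightarrow> comp1 K (id1 K B) f = f"
  using GD5 unfolding hom1_def by auto

lemma idr: "f \<in> hom1 K A B \<Longrightarrow> comp1 K f (id1 K A) = f"
  using GD5 unfolding hom1_def by auto

lemma id2: "f \<in> Ar K \<Longrightarrow> id2 K f \<in> Cell K \<and> src2 K (id2 K f) = f \<and> tgt2 K (id2 K f) = f"
  using GD7 by blast

lemma hc: "hcomposable K b a \<Longrightarrow> hcomp K b a \<in> Cell K \<and>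
      src2 K (hcomp K b a) = comp1 K (src2 K b) (src2 K a) \<and>
      tgt2 K (hcomp K b a) = comp1 K (tgt2 K b) (tgt2 K a)"
  using GD11 by blast

lemma hc': "a \<in> Cell K \<Longrightarrow> b \<in> Cell K \<Longrightarrow> src2 K a \<in> hom1 K X Y \<Longrightarrow> src2 K b \<in> hom1 K Y Z
  \<Longrightarrow> tgt2 K a \<in> hom1 K X' Y' \<Longrightarrow> tgt2 K b \<in> hom1 K Y' Z' \<Longrightarrow>
  hcomp K b a \<in> Cell K \<and>
      src2 K (hcomp K b a) = comp1 K (src2 K b) (src2 K a) \<and>
      tgt2 K (hcomp K b a) = comp1 K (tgt2 K b) (tgt2 K a)"
  by (rule hc) (auto simp: hcomposable_def hom1_def)

lemma idc: "B \<in> Ob K \<Longrightarrow> id_cell K (id2 K (id1 K B)) B B"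
  using id_hom[of B] id2[of "id1 K B"] unfolding id_cell_def hom1_def by auto

lemma nab: "id_cell K a A' A \<Longrightarrow> id_cell K b B' B \<Longrightarrow> f \<in> hom1 K A B \<Longrightarrow>
   nabla K a b f \<in> Cell K \<and> tgt2 K (nabla K a b f) = f \<and> src2 K (nabla K a b f) \<in> hom1 K A' B'"
proof -
  assume a: "id_cell K a A' A" "id_cell K b B' B" "f \<in> hom1 K A B"
  have "\<forall>a b A' A B' B. id_cell K a A' A \<longrightarrow> id_cell K b B' B \<longrightarrow>
      (\<forall>f \<in> hom1 K A B.
        arr_ab K a b A' A B' B (nabla K a b f) \<and>
        tgt2 K (nabla K a b f) = f \<and> src2 K (nabla K a b f) \<in> hom1 K A' B')"
    using GD14 by blast
  with a show ?thesis unfolding arr_ab_def by blast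
qed

lemma del: "id_cell K a A' A \<Longrightarrow> id_cell K b B' B \<Longrightarrow> f \<in> hom1 K A' B' \<Longrightarrow>
   delta K a b f \<in> Cell K \<and> src2 K (delta K a b f) = f \<and> tgt2 K (delta K a b f) \<in> hom1 K A B"
proof -
  assume a: "id_cell K a A' A" "id_cell K b B' B" "f \<in> hom1 K A' B'"
  have "\<forall>a b A' A B' B. id_cell K a A' A \<longrightarrow> id_cell K b B' B \<longrightarrow>
      (\<forall>f \<in> hom1 K A' B'.
        arr_ab K a b A' A B' B (delta K a b f) \<and>
        src2 K (delta K a b f) = f \<and> tgt2 K (delta K a b f) \<in> hom1 K A B)"
    using GD15 by blast
  with a show ?thesis unfolding arr_ab_def by blast
qed

lemma ncomp: "id_cell K a A' A \<Longrightarrow> id_cell K b B' B \<Longrightarrow> X \<in> Ob K \<Longrightarrow>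
      g \<in> hom1 K A X \<Longrightarrow> f \<in> hom1 K X B \<Longrightarrow>
      hcomp K (nabla K (id2 K (id1 K X)) b f) (nabla K a (id2 K (id1 K X)) g)
        = nabla K a b (comp1 K f g)"
  using GD16 by blast

lemma dcomp: "id_cell K a A' A \<Longrightarrow> id_cell K b B' B \<Longrightarrow> X \<in> Ob K \<Longrightarrow>
      g \<in> hom1 K A' X \<Longrightarrow> f \<in> hom1 K X B' \<Longrightarrow>
      hcomp K (delta K (id2 K (id1 K X)) b f) (delta K a (id2 K (id1 K X)) g)
        = delta K a b (comp1 K f g)"
  using GD17 by blast

lemma hom_Ar: "f \<in> hom1 K A B \<Longrightarrow> f \<in> Ar K" unfolding hom1_def by auto

end

theorem proposition1:
  fixes K :: "('o, 'a, 'c, 'm) gen2cat_scheme"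
  assumes "gen2cat K"
    and "id_cell K \<alpha> A' A" and "id_cell K \<beta> B' B" and "id_cell K \<gamma> C' C"
    and "f \<in> hom1 K A B" and "g \<in> hom1 K B C"
    and "f' \<in> hom1 K A' B'" and "g' \<in> hom1 K B' C'"
  shows "(\<exists>\<theta> \<in> Cell K. src2 K \<theta> = comp1 K (down K \<beta> \<gamma> g) (down K \<alpha> \<beta> f) \<and>
                       tgt2 K \<theta> = down K \<alpha> \<gamma> (comp1 K g f))
       \<and> (\<exists>\<theta> \<in> Cell K. src2 K \<theta> = up K \<alpha> \<gamma> (comp1 K g' f') \<and>
                       tgt2 K \<theta> = comp1 K (up K \<beta> \<gamma> g') (up K \<alpha> \<beta> f'))"
proof
  note G = assms(1)
  have B: "B \<in> Ob K" "B' \<in> Ob K" using assms(3) unfolding id_cell_def by auto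
  define iB where "iB = id2 K (id1 K B)"
  define iB' where "iB' = id2 K (id1 K B')"
  have ciB: "id_cell K iB B B" using idc[OF G B(1)] iB_def by simp
  have ciB': "id_cell K iB' B' B'" using idc[OF G B(2)] iB'_def by simp
  have hB: "id1 K B \<in> hom1 K B B" "id1 K B' \<in> hom1 K B' B'" using id_hom[OF G] B by auto
  show "\<exists>\<theta> \<in> Cell K. src2 K \<theta> = comp1 K (down K \<beta> \<gamma> g) (down K \<alpha> \<beta> f) \<and>
                       tgt2 K \<theta> = down K \<alpha> \<gamma> (comp1 K g f)"
  proof -
    define Nf where "Nf = nabla K \<alpha> iB f"
    define Np where "Np = nabla K iB \<beta> (id1 K B)"
    define Ng where "Ng = nabla K iB \<gamma> g"
    define Nq where "Nq = nabla K \<beta> iB (id1 K B)"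
    define f1 where "f1 = src2 K Nf"
    define p where "p = src2 K Np"
    define g1 where "g1 = src2 K Ng"
    define q where "q = src2 K Nq"
    have nf: "Nf \<in> Cell K" "tgt2 K Nf = f" "f1 \<in> hom1 K A' B"
      using nab[OF G assms(2) ciB assms(5)] Nf_def f1_def by auto
    have np: "Np \<in> Cell K" "tgt2 K Np = id1 K B" "p \<in> hom1 K B B'"
      using nab[OF G ciB assms(3) hB(1)] Np_def p_def by auto
    have ng: "Ng \<in> Cell K" "tgt2 K Ng = g" "g1 \<in> hom1 K B C'"
      using nab[OF G ciB assms(4) assms(6)] Ng_def g1_def by auto
    have nq: "Nq \<in> Cell K" "tgt2 K Nq = id1 K B" "q \<in> hom1 K B' B"
      using nab[OF G assms(3) ciB hB(1)] Nq_def q_def by auto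
    have e1: "hcomp K Np Nf = nabla K \<alpha> \<beta> f"
      using ncomp[OF G assms(2) assms(3) B(1) assms(5) hB(1)] idl[OF G assms(5)]
      unfolding Np_def Nf_def iB_def by simp
    have e2: "hcomp K Ng Nq = nabla K \<beta> \<gamma> g"
      using ncomp[OF G assms(3) assms(4) B(1) hB(1) assms(6)] idr[OF G assms(6)]
      unfolding Ng_def Nq_def iB_def by simp
    have e3: "hcomp K Ng Nf = nabla K \<alpha> \<gamma> (comp1 K g f)"
      using ncomp[OF G assms(2) assms(4) B(1) assms(5) assms(6)]
      unfolding Ng_def Nf_def iB_def by simp
    have d1: "down K \<alpha> \<beta> f = comp1 K p f1"
      using hc'[OF G nf(1) np(1), of A' B B' A B B] nf np assms(5) hB e1
      unfolding down_def p_def f1_def by auto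
    have d2: "down K \<beta> \<gamma> g = comp1 K g1 q"
      using hc'[OF G nq(1) ng(1), of B' B C' B B C] nq ng assms(6) hB e2
      unfolding down_def g1_def q_def by auto
    have d3: "down K \<alpha> \<gamma> (comp1 K g f) = comp1 K g1 f1"
      using hc'[OF G nf(1) ng(1), of A' B C' A B C] nf ng assms(5,6) e3
      unfolding down_def g1_def f1_def by auto
    have h1: "hcomp K Nq Np \<in> Cell K \<and> src2 K (hcomp K Nq Np) = comp1 K q p \<and>
        tgt2 K (hcomp K Nq Np) = id1 K B"
      using hc'[OF G np(1) nq(1), of B B' B B B B] np nq hB idl[OF G hB(1)]
      unfolding p_def q_def by auto
    have qp: "comp1 K q p \<in> hom1 K B B" using comp_hom[OF G np(3) nq(3)] .
    have if1: "id2 K f1 \<in> Cell K" "src2 K (id2 K f1) = f1" "tgt2 K (id2 K f1) = f1"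
      using id2[OF G hom_Ar[OF G nf(3)]] by auto
    have ig1: "id2 K g1 \<in> Cell K" "src2 K (id2 K g1) = g1" "tgt2 K (id2 K g1) = g1"
      using id2[OF G hom_Ar[OF G ng(3)]] by auto
    have h2: "hcomp K (hcomp K Nq Np) (id2 K f1) \<in> Cell K \<and>
       src2 K (hcomp K (hcomp K Nq Np) (id2 K f1)) = comp1 K (comp1 K q p) f1 \<and>
       tgt2 K (hcomp K (hcomp K Nq Np) (id2 K f1)) = f1"
      using hc'[OF G if1(1) conjunct1[OF h1], of A' B B A' B B] h1 if1 qp hB nf(3)
        idl[OF G nf(3)] by auto
    have qpf: "comp1 K (comp1 K q p) f1 \<in> hom1 K A' B" using comp_hom[OF G nf(3) qp] .
    have h3: "hcomp K (id2 K g1) (hcomp K (hcomp K Nq Np) (id2 K f1)) \<in> Cell K \<and>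
       src2 K (hcomp K (id2 K g1) (hcomp K (hcomp K Nq Np) (id2 K f1))) = comp1 K g1 (comp1 K (comp1 K q p) f1) \<and>
       tgt2 K (hcomp K (id2 K g1) (hcomp K (hcomp K Nq Np) (id2 K f1))) = comp1 K g1 f1"
      using hc'[OF G conjunct1[OF h2] ig1(1), of A' B C' A' B C'] h2 ig1 qpf nf(3) ng(3) by auto
    have eq: "comp1 K (comp1 K g1 q) (comp1 K p f1) = comp1 K g1 (comp1 K (comp1 K q p) f1)"
    proof -
      have "comp1 K (comp1 K g1 q) (comp1 K p f1) = comp1 K g1 (comp1 K q (comp1 K p f1))"
        using assoc[OF G comp_hom[OF G nf(3) np(3)] nq(3) ng(3)] by simp
      also have "\<dots> = comp1 K g1 (comp1 K (comp1 K q p) f1)"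
        using assoc[OF G nf(3) np(3) nq(3)] by simp
      finally show ?thesis .
    qed
    show ?thesis using h3 d1 d2 d3 eq by metis
  qed
next
  note G = assms(1)
  have B: "B \<in> Ob K" "B' \<in> Ob K" using assms(3) unfolding id_cell_def by auto
  define iB' where "iB' = id2 K (id1 K B')"
  have ciB': "id_cell K iB' B' B'" using idc[OF G B(2)] iB'_def by simp
  have hB: "id1 K B \<in> hom1 K B B" "id1 K B' \<in> hom1 K B' B'" using id_hom[OF G] B by auto
  show "\<exists>\<theta> \<in> Cell K. src2 K \<theta> = up K \<alpha> \<gamma> (comp1 K g' f') \<and>
                       tgt2 K \<theta> = comp1 K (up K \<beta> \<gamma> g') (up K \<alpha> \<beta> f')"
  proof -
    define Nf where "Nf = delta K \<alpha> iB' f'"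
    define Np where "Np = delta K iB' \<beta> (id1 K B')"
    define Ng where "Ng = delta K iB' \<gamma> g'"
    define Nq where "Nq = delta K \<beta> iB' (id1 K B')"
    define f1 where "f1 = tgt2 K Nf"
    define p where "p = tgt2 K Np"
    define g1 where "g1 = tgt2 K Ng"
    define q where "q = tgt2 K Nq"
    have nf: "Nf \<in> Cell K" "src2 K Nf = f'" "f1 \<in> hom1 K A B'"
      using del[OF G assms(2) ciB' assms(7)] Nf_def f1_def by auto
    have np: "Np \<in> Cell K" "src2 K Np = id1 K B'" "p \<in> hom1 K B' B"
      using del[OF G ciB' assms(3) hB(2)] Np_def p_def by auto
    have ng: "Ng \<in> Cell K" "src2 K Ng = g'" "g1 \<in> hom1 K B' C"
      using del[OF G ciB' assms(4) assms(8)] Ng_def g1_def by auto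
    have nq: "Nq \<in> Cell K" "src2 K Nq = id1 K B'" "q \<in> hom1 K B B'"
      using del[OF G assms(3) ciB' hB(2)] Nq_def q_def by auto
    have e1: "hcomp K Np Nf = delta K \<alpha> \<beta> f'"
      using dcomp[OF G assms(2) assms(3) B(2) assms(7) hB(2)] idl[OF G assms(7)]
      unfolding Np_def Nf_def iB'_def by simp
    have e2: "hcomp K Ng Nq = delta K \<beta> \<gamma> g'"
      using dcomp[OF G assms(3) assms(4) B(2) hB(2) assms(8)] idr[OF G assms(8)]
      unfolding Ng_def Nq_def iB'_def by simp
    have e3: "hcomp K Ng Nf = delta K \<alpha> \<gamma> (comp1 K g' f')"
      using dcomp[OF G assms(2) assms(4) B(2) assms(7) assms(8)]
      unfolding Ng_def Nf_def iB'_def by simp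
    have d1: "up K \<alpha> \<beta> f' = comp1 K p f1"
      using hc'[OF G nf(1) np(1), of A' B' B' A B' B] nf np assms(7) hB e1
      unfolding up_def p_def f1_def by auto
    have d2: "up K \<beta> \<gamma> g' = comp1 K g1 q"
      using hc'[OF G nq(1) ng(1), of B' B' C' B B' C] nq ng assms(8) hB e2
      unfolding up_def g1_def q_def by auto
    have d3: "up K \<alpha> \<gamma> (comp1 K g' f') = comp1 K g1 f1"
      using hc'[OF G nf(1) ng(1), of A' B' C' A B' C] nf ng assms(7,8) e3
      unfolding up_def g1_def f1_def by auto
    have h1: "hcomp K Nq Np \<in> Cell K \<and> tgt2 K (hcomp K Nq Np) = comp1 K q p \<and>
        src2 K (hcomp K Nq Np) = id1 K B'"
      using hc'[OF G np(1) nq(1), of B' B' B' B' B B'] np nq hB idl[OF G hB(2)]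
      unfolding p_def q_def by auto
    have qp: "comp1 K q p \<in> hom1 K B' B'" using comp_hom[OF G np(3) nq(3)] .
    have if1: "id2 K f1 \<in> Cell K" "src2 K (id2 K f1) = f1" "tgt2 K (id2 K f1) = f1"
      using id2[OF G hom_Ar[OF G nf(3)]] by auto
    have ig1: "id2 K g1 \<in> Cell K" "src2 K (id2 K g1) = g1" "tgt2 K (id2 K g1) = g1"
      using id2[OF G hom_Ar[OF G ng(3)]] by auto
    have h2: "hcomp K (hcomp K Nq Np) (id2 K f1) \<in> Cell K \<and>
       tgt2 K (hcomp K (hcomp K Nq Np) (id2 K f1)) = comp1 K (comp1 K q p) f1 \<and>
       src2 K (hcomp K (hcomp K Nq Np) (id2 K f1)) = f1"
      using hc'[OF G if1(1) conjunct1[OF h1], of A B' B' A B' B'] h1 if1 qp hB nf(3)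
        idl[OF G nf(3)] by auto
    have qpf: "comp1 K (comp1 K q p) f1 \<in> hom1 K A B'" using comp_hom[OF G nf(3) qp] .
    have h3: "hcomp K (id2 K g1) (hcomp K (hcomp K Nq Np) (id2 K f1)) \<in> Cell K \<and>
       tgt2 K (hcomp K (id2 K g1) (hcomp K (hcomp K Nq Np) (id2 K f1))) = comp1 K g1 (comp1 K (comp1 K q p) f1) \<and>
       src2 K (hcomp K (id2 K g1) (hcomp K (hcomp K Nq Np) (id2 K f1))) = comp1 K g1 f1"
      using hc'[OF G conjunct1[OF h2] ig1(1), of A B' C A B' C] h2 ig1 qpf nf(3) ng(3) by auto
    have eq: "comp1 K (comp1 K g1 q) (comp1 K p f1) = comp1 K g1 (comp1 K (comp1 K q p) f1)"
    proof -
      have "comp1 K (comp1 K g1 q) (comp1 K p f1) = comp1 K g1 (comp1 K q (comp1 K p f1))"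
        using assoc[OF G comp_hom[OF G nf(3) np(3)] nq(3) ng(3)] by simp
      also have "\<dots> = comp1 K g1 (comp1 K (comp1 K q p) f1)"
        using assoc[OF G nf(3) np(3) nq(3)] by simp
      finally show ?thesis .
    qed
    show ?thesis using h3 d1 d2 d3 eq by metis
  qed
qed

end
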